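(* Let $(P_t)_{t\ge0}$ be a measurable Markovian transition function on a Polish space $E$ with Borel $\sigma$-algebra $\mathcal{B}$, with resolvent $R_\alpha f=\int_0^\infty e^{-\alpha t}P_tf\,dt$. Assume $(P_t)_{t>0}$ is strong Feller (each $P_t$, $t>0$, maps bounded Borel functions to continuous functions), and that there exist a probability measure $\mu$ and a sequence $t_n\nearrow\infty$ such that the family of probability measures $\mu_n(A):=\frac1{t_n}\int_0^{t_n}\mu(P_s1_A)\,ds$, $A\in\mathcal{B}$, is tight. Then for every $\alpha>0$, with $m:=\mu\circ R_\alpha$ (i.e. $m(f)=\int R_\alpha f\,d\mu$), there exists a subsequence $(t_{n_k})_k$ such that $c((P_t)_{t>0},m,(t_{n_k})_k)=0$.
   Context: For a finite measure $m$ and $s_k\nearrow\infty$, $c((P_t)_t,m,(s_k)_k):=\lim_{\varepsilon\searrow0}\sup_{A\in\mathcal{B},\,m(A)\le\varepsilon}\sup_k\frac1{s_k}\int_0^{s_k}m(P_s1_A)\,ds$. A measurable Markovian transition function is a family of Markovian kernels with $P_tP_s=P_{t+s}$ and $(t,x)\mapsto P_tf(x)$ jointly measurable. *)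

theory Defs
  imports "HOL-Probability.Probability"
begin

definition Pf :: "(real \<Rightarrow> 'a \<Rightarrow> 'a::topological_space measure) \<Rightarrow> real \<Rightarrow> ('a \<Rightarrow> real) \<Rightarrow> 'a \<Rightarrow> real" where
  "Pf P t f x = (\<integral>y. f y \<partial>(P t x))"

definition measurable_markov_tf :: "(real \<Rightarrow> 'a \<Rightarrow> 'a::topological_space measure) \<Rightarrow> bool" where
  "measurable_markov_tf P \<longleftrightarrow>
     (\<forall>t\<ge>0. \<forall>x. prob_space (P t x) \<and> sets (P t x) = sets borel) \<and>
     (\<forall>t\<ge>0. P t \<in> borel \<rightarrow>\<^sub>M subprob_algebra borel) \<and>
     (\<forall>s\<ge>0. \<forall>t\<ge>0. \<forall>x. \<forall>A\<in>sets borel.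
         measure (P (t + s) x) A = (\<integral>y. measure (P s y) A \<partial>(P t x))) \<and>
     (\<forall>f::'a \<Rightarrow> real. f \<in> borel_measurable borel \<longrightarrow> bounded (range f) \<longrightarrow>
         (\<lambda>(t, x). Pf P t f x) \<in> borel_measurable (restrict_space borel {0..} \<Otimes>\<^sub>M borel))"

definition strong_feller :: "(real \<Rightarrow> 'a \<Rightarrow> 'a::topological_space measure) \<Rightarrow> bool" where
  "strong_feller P \<longleftrightarrow>
     (\<forall>t>0. \<forall>f::'a \<Rightarrow> real. f \<in> borel_measurable borel \<longrightarrow> bounded (range f) \<longrightarrow>
         continuous_on UNIV (Pf P t f))"

definition resolvent :: "(real \<Rightarrow> 'a \<Rightarrow> 'a::topological_space measure) \<Rightarrow> real \<Rightarrow> ('a \<Rightarrow> real) \<Rightarrow> 'a \<Rightarrow> real" where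
  "resolvent P \<alpha> f x = (LBINT t:{0..}. exp (- \<alpha> * t) * Pf P t f x)"

definition cesaro :: "(real \<Rightarrow> 'a \<Rightarrow> 'a::topological_space measure) \<Rightarrow> 'a measure \<Rightarrow> real \<Rightarrow> 'a set \<Rightarrow> real" where
  "cesaro P \<mu> T A = (1 / T) * (LBINT s:{0..T}. (\<integral>x. Pf P s (indicator A) x \<partial>\<mu>))"

definition tight_family :: "(nat \<Rightarrow> 'a::topological_space set \<Rightarrow> real) \<Rightarrow> bool" where
  "tight_family \<nu> \<longleftrightarrow> (\<forall>\<epsilon>>0. \<exists>K. compact K \<and> (\<forall>n. \<nu> n (- K) \<le> \<epsilon>))"

text \<open>The constant c((P_t),m,(s_k)), where m is given as a functional on functions
  (m(A) = m(1_A)).\<close>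
definition cconst :: "(real \<Rightarrow> 'a \<Rightarrow> 'a::topological_space measure) \<Rightarrow> (('a \<Rightarrow> real) \<Rightarrow> real)
    \<Rightarrow> (nat \<Rightarrow> real) \<Rightarrow> real" where
  "cconst P m s = Lim (at_right 0) (\<lambda>\<epsilon>.
      SUP A \<in> {A \<in> sets borel. m (indicator A) \<le> \<epsilon>}.
        SUP k. (1 / s k) * (LBINT u:{0..s k}. m (Pf P u (indicator A))))"

end

theory Submission
  imports Defs
begin

lemma int_le_enn:
  fixes f :: "'b \<Rightarrow> real"
  assumes f0: "\<And>x. x \<in> space M \<Longrightarrow> 0 \<le> f x" and fg: "\<And>x. x \<in> space M \<Longrightarrow> ennreal (f x) \<le> g x"
    and fin: "(\<integral>\<^sup>+x. g x \<partial>M) \<noteq> \<infinity>"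
  shows "integral\<^sup>L M f \<le> enn2real (\<integral>\<^sup>+x. g x \<partial>M)"
proof (cases "integrable M f")
  case True
  have "integral\<^sup>L M f = enn2real (\<integral>\<^sup>+x. ennreal (f x) \<partial>M)"
    by (rule integral_eq_nn_integral) (use True f0 in auto)
  also have "\<dots> \<le> enn2real (\<integral>\<^sup>+x. g x \<partial>M)"
    by (rule enn2real_mono) (use fg fin in \<open>auto intro!: nn_integral_mono simp: top.not_eq_extremum\<close>)
  finally show ?thesis .
next
  case False
  then show ?thesis by (simp add: not_integrable_integral_eq)
qed


lemma dini:
  fixes g :: "nat \<Rightarrow> 'b::metric_space \<Rightarrow> real"
  assumes K: "compact K" and c: "\<And>j. continuous_on UNIV (g j)"
    and dec: "\<And>j x. g (Suc j) x \<le> g j x" and lim: "\<And>x. (\<lambda>j. g j x) \<longlonglongrightarrow> 0" and e: "0 < e"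
  shows "\<exists>J. \<forall>j\<ge>J. \<forall>x\<in>K. g j x < e"
proof (rule ccontr)
  assume "\<not> ?thesis"
  then have "\<forall>J. \<exists>j\<ge>J. \<exists>x\<in>K. e \<le> g j x" by (auto simp: not_less)
  then obtain jj xx where jj: "\<And>J. jj J \<ge> J" and xK: "\<And>J. xx J \<in> K" and ge: "\<And>J. e \<le> g (jj J) (xx J)"
    by metis
  have decj: "g j x \<le> g i x" if "i \<le> j" for i j x
  proof -
    have "decseq (\<lambda>j. g j x)" by (rule decseq_SucI) (rule dec)
    then show ?thesis using that by (simp add: decseq_def)
  qed
  have ge2: "e \<le> g J (xx J)" for J using ge[of J] decj[OF jj[of J], of "xx J"] by linarith
  have "seq_compact K" by (rule compact_imp_seq_compact[OF K])
  then obtain x r where x: "x \<in> K" and r: "strict_mono r" and conv: "(xx \<circ> r) \<longlonglongrightarrow> x"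
    using seq_compactE xK by metis
  have "e \<le> g i x" for i
  proof -
    have ic: "isCont (g i) x" using c[of i] by (simp add: continuous_on_eq_continuous_at)
    have t: "(\<lambda>k. g i ((xx \<circ> r) k)) \<longlonglongrightarrow> g i x" by (rule isCont_tendsto_compose[OF ic conv])
    show ?thesis
    proof (rule LIMSEQ_le_const[OF t], intro exI allI impI)
      fix k assume "i \<le> k"
      then have "i \<le> r k" using seq_suble[OF r, of k] by linarith
      then show "e \<le> g i ((xx \<circ> r) k)" using ge2[of "r k"] decj[of i "r k" "xx (r k)"] by simp
    qed
  qed
  then have "e \<le> 0" by (intro LIMSEQ_le_const[OF lim[of x]]) auto
  then show False using e by simp
qed


locale setting =
  fixes P :: "real \<Rightarrow> 'a::polish_space \<Rightarrow> 'a measure"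
    and \<mu> :: "'a measure" and tn :: "nat \<Rightarrow> real" and \<alpha> :: real
  assumes mm: "measurable_markov_tf P"
    and sf: "strong_feller P"
    and pr: "prob_space \<mu>" and s\<mu>: "sets \<mu> = sets borel"
    and tmono: "mono tn" and tlim: "filterlim tn at_top sequentially" and tpos: "\<forall>n. tn n > 0"
    and tight: "tight_family (\<lambda>n. cesaro P \<mu> (tn n))"
    and apos: "\<alpha> > 0"
begin

lemma ps: "0 \<le> t \<Longrightarrow> prob_space (P t x)"
  using mm unfolding measurable_markov_tf_def by blast

lemma sP: "0 \<le> t \<Longrightarrow> sets (P t x) = sets borel"
  using mm unfolding measurable_markov_tf_def by blast

lemma spP: "0 \<le> t \<Longrightarrow> space (P t x) = UNIV"
  using sP[of t x] sets_eq_imp_space_eq by fastforce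

lemma kern: "0 \<le> t \<Longrightarrow> P t \<in> borel \<rightarrow>\<^sub>M subprob_algebra borel"
  using mm unfolding measurable_markov_tf_def by blast

lemma CK: "0 \<le> s \<Longrightarrow> 0 \<le> t \<Longrightarrow> A \<in> sets borel \<Longrightarrow>
   measure (P (t + s) x) A = (\<integral>y. measure (P s y) A \<partial>(P t x))"
  using mm unfolding measurable_markov_tf_def by blast

lemma jm: "f \<in> borel_measurable borel \<Longrightarrow> bounded (range f) \<Longrightarrow>
   (\<lambda>(t, x). Pf P t f x) \<in> borel_measurable (restrict_space borel {0..} \<Otimes>\<^sub>M borel)"
  using mm unfolding measurable_markov_tf_def by blast

lemma sfe: "0 < t \<Longrightarrow> f \<in> borel_measurable borel \<Longrightarrow> bounded (range f) \<Longrightarrow>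
   continuous_on UNIV (Pf P t f)"
  using sf unfolding strong_feller_def by blast

lemma bounded_indicator: "bounded (range (indicator A :: 'a \<Rightarrow> real))"
  unfolding bounded_iff by (intro exI[of _ 1]) (auto simp: indicator_def)

lemma Pf_ind: "0 \<le> t \<Longrightarrow> A \<in> sets borel \<Longrightarrow> Pf P t (indicator A) x = measure (P t x) A"
proof -
  assume t: "0 \<le> t" and A: "A \<in> sets borel"
  show ?thesis unfolding Pf_def using spP[OF t] by simp
qed

definition psi :: "'a set \<Rightarrow> real \<Rightarrow> 'a \<Rightarrow> real" where
  "psi A t x = (if 0 \<le> t then measure (P t x) A else 0)"

lemma psi_nn: "0 \<le> psi A t x"
  by (simp add: psi_def)

lemma psi_le1: "psi A t x \<le> 1"
proof (cases "0 \<le> t")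
  case True
  interpret prob_space "P t x" using ps[OF True] .
  show ?thesis using True by (simp add: psi_def)
qed (simp add: psi_def)

lemma psi_mono: "A \<subseteq> B \<Longrightarrow> B \<in> sets borel \<Longrightarrow> psi A t x \<le> psi B t x"
proof (cases "0 \<le> t")
  case True
  assume "A \<subseteq> B" "B \<in> sets borel"
  interpret prob_space "P t x" using ps[OF True] .
  show ?thesis using True \<open>A \<subseteq> B\<close> \<open>B \<in> sets borel\<close> sP[OF True]
    by (simp add: psi_def finite_measure_mono)
qed (simp add: psi_def)

lemma psi_eq: "A \<in> sets borel \<Longrightarrow> psi A t x = indicator {0..} t * Pf P (max t 0) (indicator A) x"
  by (simp add: psi_def Pf_ind indicator_def)

lemma psi_meas_borel: "A \<in> sets borel \<Longrightarrow>
   (\<lambda>(t, x). psi A t x) \<in> borel_measurable (borel \<Otimes>\<^sub>M borel)"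
proof -
  assume A: "A \<in> sets borel"
  have f: "(\<lambda>(t, x). Pf P t (indicator A) x) \<in> borel_measurable (restrict_space borel {0..} \<Otimes>\<^sub>M borel)"
    by (rule jm) (use A bounded_indicator in auto)
  have g: "(\<lambda>(t::real, x::'a). (max t 0, x)) \<in> measurable (borel \<Otimes>\<^sub>M borel) (restrict_space borel {0..} \<Otimes>\<^sub>M borel)"
  proof -
    have 1: "(\<lambda>(t::real, x::'a). max t 0) \<in> measurable (borel \<Otimes>\<^sub>M borel) (restrict_space borel {0..})"
      by (rule measurable_restrict_space2) (auto simp: space_pair_measure)
    have 2: "(\<lambda>(t::real, x::'a). x) \<in> measurable (borel \<Otimes>\<^sub>M borel) borel"
      by measurable
    show ?thesis using measurable_Pair[OF 1 2] by (simp add: case_prod_beta')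
  qed
  have "(\<lambda>p. (\<lambda>(t, x). Pf P t (indicator A) x) ((\<lambda>(t::real, x::'a). (max t 0, x)) p)) \<in> borel_measurable (borel \<Otimes>\<^sub>M borel)"
    by (rule measurable_compose[OF g f])
  then have "(\<lambda>(t, x). Pf P (max t 0) (indicator A) x) \<in> borel_measurable (borel \<Otimes>\<^sub>M borel)"
    by (simp add: case_prod_beta')
  then have "(\<lambda>(t, x). indicator {0..} t * Pf P (max t 0) (indicator A) x) \<in> borel_measurable (borel \<Otimes>\<^sub>M borel)"
    by (simp add: case_prod_beta') measurable
  then show ?thesis using psi_eq[OF A] by (simp add: case_prod_beta')
qed

lemma psi_meas: "A \<in> sets borel \<Longrightarrow> sets M = sets (borel::real measure) \<Longrightarrow> sets N = sets (borel::'a measure) \<Longrightarrow>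
   (\<lambda>(t, x). psi A t x) \<in> borel_measurable (M \<Otimes>\<^sub>M N)"
  using psi_meas_borel measurable_cong_sets[OF sets_pair_measure_cong[of M borel N borel] refl]
  by blast

lemma sf_mu: "sigma_finite_measure \<mu>"
  using pr by (simp add: prob_space_imp_sigma_finite)

lemma psi_meas_lb: "A \<in> sets borel \<Longrightarrow> (\<lambda>(t, x). psi A t x) \<in> borel_measurable (lborel \<Otimes>\<^sub>M \<mu>)"
  by (rule psi_meas) (auto simp: s\<mu>)

lemma shift: "(f :: real \<Rightarrow> ennreal) \<in> borel_measurable borel \<Longrightarrow> (\<integral>\<^sup>+x. f x \<partial>lborel) = (\<integral>\<^sup>+x. f (c + x) \<partial>lborel)"
  using nn_integral_real_affine[of f 1 c] by simp

lemma exp_tail: "(\<integral>\<^sup>+t. ennreal (exp (-\<alpha>*t)) * indicator {c..} t \<partial>lborel) = ennreal (exp (-\<alpha>*c)/\<alpha>)"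
proof -
  have hi0: "((\<lambda>t. if t \<in> {c..} then exp (-\<alpha>*t) else 0) has_integral exp (-\<alpha>*c)/\<alpha>) UNIV"
    by (rule has_integral_restrict_UNIV[THEN iffD2, OF has_integral_exp_minus_to_infinity[OF apos]])
  have e: "(\<lambda>t. if t \<in> {c..} then exp (-\<alpha>*t) else 0) = (\<lambda>t. exp (-\<alpha>*t) * indicator {c..} t)"
    by (rule ext) (simp add: indicator_def)
  have hi: "((\<lambda>t. exp (-\<alpha>*t) * indicator {c..} t) has_integral exp (-\<alpha>*c)/\<alpha>) UNIV"
    using hi0 unfolding e .
  have m: "(\<lambda>t. exp (-\<alpha>*t) * indicator {c..} t) \<in> borel_measurable (borel :: real measure)"
    by measurable
  have "(\<integral>\<^sup>+t. ennreal (exp (-\<alpha>*t)) * indicator {c..} t \<partial>lborel) = (\<integral>\<^sup>+t. ennreal (exp (-\<alpha>*t) * indicator {c..} t) \<partial>lborel)"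
    by (rule nn_integral_cong) (simp add: indicator_def)
  also have "\<dots> = ennreal (exp (-\<alpha>*c)/\<alpha>)"
    by (rule nn_integral_has_integral_lborel[OF m _ hi]) simp
  finally show ?thesis .
qed

lemma exp_int: "(\<integral>\<^sup>+t. ennreal (exp (-\<alpha>*t)) * indicator {0..} t \<partial>lborel) = ennreal (1/\<alpha>)"
  using exp_tail[of 0] by simp

definition Gam :: "'a set \<Rightarrow> real \<Rightarrow> ennreal" where
  "Gam A v = (\<integral>\<^sup>+x. ennreal (psi A v x) \<partial>\<mu>)"

definition MV :: "'a set \<Rightarrow> real \<Rightarrow> ennreal" where
  "MV A u = (\<integral>\<^sup>+t. ennreal (exp (-\<alpha>*t)) * indicator {0..} t * Gam A (t + u) \<partial>lborel)"

definition Vx :: "'a set \<Rightarrow> real \<Rightarrow> 'a \<Rightarrow> ennreal" where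
  "Vx A u x = (\<integral>\<^sup>+t. ennreal (exp (-\<alpha>*t) * psi A (t + u) x) * indicator {0..} t \<partial>lborel)"

definition Hn :: "'a set \<Rightarrow> real \<Rightarrow> ennreal" where
  "Hn A y = (\<integral>\<^sup>+v. Gam A v * indicator {0..y} v \<partial>lborel)"

lemma Gam_meas: "A \<in> sets borel \<Longrightarrow> Gam A \<in> borel_measurable borel"
proof -
  assume A: "A \<in> sets borel"
  have m: "(\<lambda>(v, x). ennreal (psi A v x)) \<in> borel_measurable (borel \<Otimes>\<^sub>M \<mu>)"
    using psi_meas[OF A, of borel \<mu>] s\<mu> by (auto simp: case_prod_beta')
  show ?thesis unfolding Gam_def
    by (rule sigma_finite_measure.borel_measurable_nn_integral[OF sf_mu]) (use m in \<open>simp add: case_prod_beta'\<close>)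
qed

lemma Gam_le1: "Gam A v \<le> 1"
proof -
  have "Gam A v \<le> (\<integral>\<^sup>+x. 1 \<partial>\<mu>)" unfolding Gam_def
    by (rule nn_integral_mono) (simp add: psi_le1)
  also have "\<dots> = 1" using pr by (simp add: prob_space.emeasure_space_1)
  finally show ?thesis .
qed

lemma Vx_meas: "A \<in> sets borel \<Longrightarrow> Vx A u \<in> borel_measurable \<mu>"
proof -
  assume A: "A \<in> sets borel"
  have p: "(\<lambda>(t, x). psi A t x) \<in> borel_measurable (borel \<Otimes>\<^sub>M borel)" by (rule psi_meas_borel[OF A])
  have g: "(\<lambda>(x::'a, t::real). (t + u, x)) \<in> measurable (\<mu> \<Otimes>\<^sub>M lborel) (borel \<Otimes>\<^sub>M borel)"
  proof -
    have 1: "(\<lambda>(x::'a, t::real). t + u) \<in> borel_measurable (\<mu> \<Otimes>\<^sub>M lborel)"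
      by measurable
    have 2: "(\<lambda>(x::'a, t::real). x) \<in> measurable (\<mu> \<Otimes>\<^sub>M lborel) borel"
      using measurable_fst measurable_cong_sets[OF refl s\<mu>] by (simp add: case_prod_beta') blast
    show ?thesis using measurable_Pair[OF 1 2] by (simp add: case_prod_beta')
  qed
  have m: "(\<lambda>(x, t). psi A (t + u) x) \<in> borel_measurable (\<mu> \<Otimes>\<^sub>M lborel)"
    using measurable_compose[OF g p] by (simp add: case_prod_beta')
  have m2: "(\<lambda>(x, t). ennreal (exp (-\<alpha>*t) * psi A (t + u) x) * indicator {0..} t) \<in> borel_measurable (\<mu> \<Otimes>\<^sub>M lborel)"
    using m by (simp add: case_prod_beta') measurable
  show ?thesis unfolding Vx_def
    by (rule sigma_finite_measure.borel_measurable_nn_integral[OF lborel.sigma_finite_measure_axioms])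
       (use m2 in \<open>simp add: case_prod_beta'\<close>)
qed

lemma psi_sec_x: "A \<in> sets borel \<Longrightarrow> (\<lambda>x. psi A t x) \<in> borel_measurable \<mu>"
proof -
  assume A: "A \<in> sets borel"
  have "(\<lambda>(t, x). psi A t x) \<in> borel_measurable (borel \<Otimes>\<^sub>M \<mu>)" using psi_meas[OF A] s\<mu> by simp
  from measurable_compose[OF measurable_Pair1'[of t borel \<mu>] this] show ?thesis by simp
qed

lemma psi_sec_t: "A \<in> sets borel \<Longrightarrow> (\<lambda>t. psi A t x) \<in> borel_measurable borel"
proof -
  assume A: "A \<in> sets borel"
  have "(\<lambda>(t, x). psi A t x) \<in> borel_measurable (borel \<Otimes>\<^sub>M borel)" using psi_meas_borel[OF A] by simp
  from measurable_compose[OF measurable_Pair2'[of x borel borel] this] show ?thesis by simp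
qed

lemma Vx_int_meas: "A \<in> sets borel \<Longrightarrow>
  (\<lambda>(x, t). ennreal (exp (-\<alpha>*t) * psi A (t + u) x) * indicator {0..} t) \<in> borel_measurable (\<mu> \<Otimes>\<^sub>M lborel)"
proof -
  assume A: "A \<in> sets borel"
  have p: "(\<lambda>(t, x). psi A t x) \<in> borel_measurable (borel \<Otimes>\<^sub>M borel)" by (rule psi_meas_borel[OF A])
  have g: "(\<lambda>(x::'a, t::real). (t + u, x)) \<in> measurable (\<mu> \<Otimes>\<^sub>M lborel) (borel \<Otimes>\<^sub>M borel)"
  proof -
    have 1: "(\<lambda>(x::'a, t::real). t + u) \<in> borel_measurable (\<mu> \<Otimes>\<^sub>M lborel)"
      by measurable
    have 2: "(\<lambda>(x::'a, t::real). x) \<in> measurable (\<mu> \<Otimes>\<^sub>M lborel) borel"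
      using measurable_fst measurable_cong_sets[OF refl s\<mu>] by (simp add: case_prod_beta') blast
    show ?thesis using measurable_Pair[OF 1 2] by (simp add: case_prod_beta')
  qed
  have m: "(\<lambda>(x, t). psi A (t + u) x) \<in> borel_measurable (\<mu> \<Otimes>\<^sub>M lborel)"
    using measurable_compose[OF g p] by (simp add: case_prod_beta')
  show ?thesis
    using m by (simp add: case_prod_beta') measurable
qed

lemma pair_mu_lb: "pair_sigma_finite \<mu> lborel"
  by (intro pair_sigma_finite.intro sf_mu lborel.sigma_finite_measure_axioms)

lemma MV_eq: "A \<in> sets borel \<Longrightarrow> (\<integral>\<^sup>+x. Vx A u x \<partial>\<mu>) = MV A u"
proof -
  assume A: "A \<in> sets borel"
  have F: "(\<integral>\<^sup>+t. (\<integral>\<^sup>+x. ennreal (exp (-\<alpha>*t) * psi A (t + u) x) * indicator {0..} t \<partial>\<mu>) \<partial>lborel)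
     = (\<integral>\<^sup>+x. (\<integral>\<^sup>+t. ennreal (exp (-\<alpha>*t) * psi A (t + u) x) * indicator {0..} t \<partial>lborel) \<partial>\<mu>)"
    by (rule pair_sigma_finite.Fubini'[OF pair_mu_lb]) (use Vx_int_meas[OF A, of u] in \<open>simp add: case_prod_beta'\<close>)
  have inner: "(\<integral>\<^sup>+x. ennreal (exp (-\<alpha>*t) * psi A (t + u) x) * indicator {0..} t \<partial>\<mu>)
      = ennreal (exp (-\<alpha>*t)) * indicator {0..} t * Gam A (t + u)" for t
  proof -
    have "(\<integral>\<^sup>+x. ennreal (exp (-\<alpha>*t) * psi A (t + u) x) * indicator {0..} t \<partial>\<mu>)
       = (\<integral>\<^sup>+x. (ennreal (exp (-\<alpha>*t)) * indicator {0..} t) * ennreal (psi A (t + u) x) \<partial>\<mu>)"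
      by (rule nn_integral_cong) (simp add: ennreal_mult psi_nn mult_ac)
    also have "\<dots> = ennreal (exp (-\<alpha>*t)) * indicator {0..} t * Gam A (t + u)"
      unfolding Gam_def by (rule nn_integral_cmult) (use psi_sec_x[OF A] in measurable)
    finally show ?thesis .
  qed
  show ?thesis using F unfolding inner MV_def Vx_def by simp
qed

lemma MV_meas: "A \<in> sets borel \<Longrightarrow> MV A \<in> borel_measurable borel"
proof -
  assume A: "A \<in> sets borel"
  note Gm[measurable] = Gam_meas[OF A]
  have "(\<lambda>(u, t). ennreal (exp (-\<alpha>*t)) * indicator {0..} t * Gam A (t + u)) \<in> borel_measurable (borel \<Otimes>\<^sub>M lborel)"
    by measurable
  then show ?thesis unfolding MV_def
    by (intro sigma_finite_measure.borel_measurable_nn_integral[OF lborel.sigma_finite_measure_axioms]) simp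
qed

lemma MV_le: "MV A u \<le> ennreal (1/\<alpha>)"
proof -
  have "MV A u \<le> (\<integral>\<^sup>+t. ennreal (exp (-\<alpha>*t)) * indicator {0..} t \<partial>lborel)"
    unfolding MV_def
    by (intro nn_integral_mono) (use Gam_le1 in \<open>auto simp: mult_left_le split: split_indicator\<close>)
  then show ?thesis using exp_int by simp
qed

lemma Vx_le: "Vx A u x \<le> ennreal (1/\<alpha>)"
proof -
  have "Vx A u x \<le> (\<integral>\<^sup>+t. ennreal (exp (-\<alpha>*t)) * indicator {0..} t \<partial>lborel)"
    unfolding Vx_def
    by (intro nn_integral_mono) (auto simp: psi_le1 psi_nn mult_left_le split: split_indicator intro!: ennreal_leI)
  then show ?thesis using exp_int by simp
qed

lemma MV_shift: "A \<in> sets borel \<Longrightarrow> 0 \<le> u \<Longrightarrow> MV A u \<le> ennreal (exp (\<alpha>*u)) * MV A 0"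
proof -
  assume A: "A \<in> sets borel" and u: "0 \<le> u"
  note Gm[measurable] = Gam_meas[OF A]
  have "MV A u = (\<integral>\<^sup>+v. ennreal (exp (-\<alpha>*(-u + v))) * indicator {0..} (-u + v) * Gam A ((-u + v) + u) \<partial>lborel)"
    unfolding MV_def by (rule shift) measurable
  also have "\<dots> \<le> (\<integral>\<^sup>+v. ennreal (exp (\<alpha> * u)) * (ennreal (exp (- \<alpha> * v)) * indicator {0..} v * Gam A (v + 0)) \<partial>lborel)"
  proof (intro nn_integral_mono)
    fix v :: real
    have e: "exp (-\<alpha>*(-u + v)) = exp (\<alpha>*u) * exp (-\<alpha>* v)"
      by (simp add: exp_add[symmetric] algebra_simps)
    show "ennreal (exp (-\<alpha>*(-u + v))) * indicator {0..} (-u + v) * Gam A ((-u + v) + u)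
       \<le> ennreal (exp (\<alpha>*u)) * (ennreal (exp (-\<alpha>* v)) * indicator {0..} v * Gam A (v + 0))"
    proof -
      have ee: "ennreal (exp (-\<alpha>*(-u + v))) = ennreal (exp (\<alpha>*u)) * ennreal (exp (-\<alpha> * v))"
        by (subst e, rule ennreal_mult) auto
      show ?thesis unfolding ee using u by (auto simp: mult_ac split: split_indicator)
    qed
  qed
  also have "\<dots> = ennreal (exp (\<alpha>*u)) * MV A 0"
    unfolding MV_def by (rule nn_integral_cmult) measurable
  finally show ?thesis .
qed

lemma Gam_union: "(\<And>i. B i \<in> sets borel) \<Longrightarrow> Gam (\<Union>i. B i) v \<le> (\<Sum>i. Gam (B i) v)"
proof -
  assume B: "\<And>i. B i \<in> sets borel"
  have "Gam (\<Union>i. B i) v \<le> (\<integral>\<^sup>+x. (\<Sum>i. ennreal (psi (B i) v x)) \<partial>\<mu>)"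
    unfolding Gam_def
  proof (intro nn_integral_mono)
    fix x
    show "ennreal (psi (\<Union>i. B i) v x) \<le> (\<Sum>i. ennreal (psi (B i) v x))"
    proof (cases "0 \<le> v")
      case True
      interpret prob_space "P v x" using ps[OF True] .
      have r: "range B \<subseteq> sets (P v x)" using B sP[OF True] by auto
      have "ennreal (psi (\<Union>i. B i) v x) = emeasure (P v x) (\<Union>i. B i)"
        using True by (simp add: psi_def emeasure_eq_measure)
      also have "\<dots> \<le> (\<Sum>i. emeasure (P v x) (B i))" by (rule emeasure_subadditive_countably[OF r])
      also have "\<dots> = (\<Sum>i. ennreal (psi (B i) v x))"
        using True by (simp add: psi_def emeasure_eq_measure)
      finally show ?thesis .
    qed (simp add: psi_def)
  qed
  also have "\<dots> = (\<Sum>i. Gam (B i) v)"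
    unfolding Gam_def by (rule nn_integral_suminf) (use psi_sec_x[OF B] in measurable)
  finally show ?thesis .
qed

lemma MV_union: "(\<And>i. B i \<in> sets borel) \<Longrightarrow> MV (\<Union>i. B i) 0 \<le> (\<Sum>i. MV (B i) 0)"
proof -
  assume B: "\<And>i. B i \<in> sets borel"
  have "MV (\<Union>i. B i) 0 \<le> (\<integral>\<^sup>+t. (\<Sum>i. ennreal (exp (-\<alpha>*t)) * indicator {0..} t * Gam (B i) (t + 0)) \<partial>lborel)"
    unfolding MV_def
    by (intro nn_integral_mono) (use Gam_union[OF B] in \<open>auto intro!: mult_left_mono\<close>)
  also have "\<dots> = (\<Sum>i. MV (B i) 0)"
    unfolding MV_def by (rule nn_integral_suminf) (use Gam_meas[OF B] in measurable)
  finally show ?thesis .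
qed

definition Mf :: "('a \<Rightarrow> real) \<Rightarrow> real" where
  "Mf f = (\<integral>x. resolvent P \<alpha> f x \<partial>\<mu>)"

definition q :: "real \<Rightarrow> 'a set \<Rightarrow> real" where
  "q s A = (1 / s) * (LBINT u:{0..s}. Mf (Pf P u (indicator A)))"

lemma Pf_Pf: "A \<in> sets borel \<Longrightarrow> 0 \<le> t \<Longrightarrow> 0 \<le> u \<Longrightarrow> Pf P t (Pf P u (indicator A)) x = psi A (t + u) x"
proof -
  assume A: "A \<in> sets borel" and t: "0 \<le> t" and u: "0 \<le> u"
  have "Pf P u (indicator A) = (\<lambda>y. measure (P u y) A)" by (rule ext) (simp add: Pf_ind[OF u A])
  then have "Pf P t (Pf P u (indicator A)) x = (\<integral>y. measure (P u y) A \<partial>(P t x))" by (simp add: Pf_def)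
  also have "\<dots> = measure (P (t + u) x) A" by (rule CK[OF u t A, symmetric])
  finally show ?thesis using t u by (simp add: psi_def)
qed

lemma Pf_nn: assumes "\<And>y. 0 \<le> f y" shows "0 \<le> Pf P t f x"
  unfolding Pf_def using assms by (intro Bochner_Integration.integral_nonneg) auto

lemma resolvent_nn: assumes "\<And>y. 0 \<le> f y" shows "0 \<le> resolvent P \<alpha> f x"
  unfolding resolvent_def set_lebesgue_integral_def using assms
  by (intro Bochner_Integration.integral_nonneg) (auto intro!: mult_nonneg_nonneg Pf_nn simp: indicator_def)

lemma Mf_nn: assumes "\<And>y. 0 \<le> f y" shows "0 \<le> Mf f"
  unfolding Mf_def using assms by (intro Bochner_Integration.integral_nonneg) (auto intro!: resolvent_nn)

lemma ind_nn: "0 \<le> (indicator A y :: real)"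
  by (simp add: indicator_def)

lemma res_le: "A \<in> sets borel \<Longrightarrow> 0 \<le> u \<Longrightarrow> resolvent P \<alpha> (Pf P u (indicator A)) x \<le> enn2real (Vx A u x)"
proof -
  assume A: "A \<in> sets borel" and u: "0 \<le> u"
  show ?thesis unfolding resolvent_def set_lebesgue_integral_def Vx_def
  proof (rule int_le_enn)
    fix t :: real
    show "0 \<le> indicator {0..} t *\<^sub>R (exp (- \<alpha> * t) * Pf P t (Pf P u (indicator A)) x)"
      by (auto intro!: mult_nonneg_nonneg Pf_nn ind_nn)
    show "ennreal (indicator {0..} t *\<^sub>R (exp (- \<alpha> * t) * Pf P t (Pf P u (indicator A)) x))
       \<le> ennreal (exp (- \<alpha> * t) * psi A (t + u) x) * indicator {0..} t"
      using Pf_Pf[OF A _ u, of t x] by (auto split: split_indicator)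
  next
    have "(\<integral>\<^sup>+t. ennreal (exp (- \<alpha> * t) * psi A (t + u) x) * indicator {0..} t \<partial>lborel) \<le> ennreal (1/\<alpha>)"
      using Vx_le[of A u x] unfolding Vx_def .
    then show "(\<integral>\<^sup>+t. ennreal (exp (- \<alpha> * t) * psi A (t + u) x) * indicator {0..} t \<partial>lborel) \<noteq> \<infinity>"
      by (auto simp: top_unique)
  qed
qed

lemma Vx_fin: "Vx A u x < top"
  using Vx_le[of A u x] by (simp add: le_less_trans)

lemma MV_fin: "MV A u < top"
  using MV_le[of A u] by (simp add: le_less_trans)

lemma Mf_le: "A \<in> sets borel \<Longrightarrow> 0 \<le> u \<Longrightarrow> ennreal (Mf (Pf P u (indicator A))) \<le> MV A u"
proof -
  assume A: "A \<in> sets borel" and u: "0 \<le> u"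
  have "Mf (Pf P u (indicator A)) \<le> enn2real (\<integral>\<^sup>+x. Vx A u x \<partial>\<mu>)"
    unfolding Mf_def
  proof (rule int_le_enn)
    fix x
    show "0 \<le> resolvent P \<alpha> (Pf P u (indicator A)) x" by (auto intro!: resolvent_nn Pf_nn ind_nn)
    show "ennreal (resolvent P \<alpha> (Pf P u (indicator A)) x) \<le> Vx A u x"
    proof -
      have "ennreal (resolvent P \<alpha> (Pf P u (indicator A)) x) \<le> ennreal (enn2real (Vx A u x))"
        using res_le[OF A u, of x] by (rule ennreal_leI)
      then show ?thesis by (simp only: ennreal_enn2real[OF Vx_fin[of A u x]])
    qed
  next
    show "(\<integral>\<^sup>+x. Vx A u x \<partial>\<mu>) \<noteq> \<infinity>" using MV_eq[OF A] MV_fin[of A u] by simp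
  qed
  then have "ennreal (Mf (Pf P u (indicator A))) \<le> ennreal (enn2real (MV A u))"
    using MV_eq[OF A, of u] by (simp add: ennreal_leI)
  then show ?thesis by (simp only: ennreal_enn2real[OF MV_fin[of A u]])
qed

lemma q_le: "A \<in> sets borel \<Longrightarrow> 0 < s \<Longrightarrow> q s A \<le> enn2real (\<integral>\<^sup>+u. MV A u * indicator {0..s} u \<partial>lborel) / s"
proof -
  assume A: "A \<in> sets borel" and s: "0 < s"
  have "(LBINT u:{0..s}. Mf (Pf P u (indicator A))) \<le> enn2real (\<integral>\<^sup>+u. MV A u * indicator {0..s} u \<partial>lborel)"
    unfolding set_lebesgue_integral_def
  proof (rule int_le_enn)
    fix u :: real
    show "0 \<le> indicator {0..s} u *\<^sub>R Mf (Pf P u (indicator A))"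
      by (auto intro!: mult_nonneg_nonneg Mf_nn Pf_nn ind_nn)
    show "ennreal (indicator {0..s} u *\<^sub>R Mf (Pf P u (indicator A))) \<le> MV A u * indicator {0..s} u"
      using Mf_le[OF A, of u] by (auto split: split_indicator)
  next
    have "(\<integral>\<^sup>+u. MV A u * indicator {0..s} u \<partial>lborel) \<le> (\<integral>\<^sup>+u. ennreal (1/\<alpha>) * indicator {0..s} u \<partial>lborel)"
      by (intro nn_integral_mono) (use MV_le in \<open>auto split: split_indicator\<close>)
    also have "\<dots> = ennreal (1/\<alpha>) * ennreal s" using s by (simp add: nn_integral_cmult_indicator)
    finally show "(\<integral>\<^sup>+u. MV A u * indicator {0..s} u \<partial>lborel) \<noteq> \<infinity>"
      by (auto simp: top_unique ennreal_mult_eq_top_iff)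
  qed
  then show ?thesis unfolding q_def using s by (simp add: divide_right_mono)
qed

lemma Mf_ind: "A \<in> sets borel \<Longrightarrow> Mf (indicator A) = enn2real (MV A 0)"
proof -
  assume A: "A \<in> sets borel"
  have r: "resolvent P \<alpha> (indicator A) x = enn2real (Vx A 0 x)" for x
  proof -
    have "resolvent P \<alpha> (indicator A) x = (\<integral>t. exp (-\<alpha>*t) * psi A (t + 0) x * indicator {0..} t \<partial>lborel)"
      unfolding resolvent_def set_lebesgue_integral_def
      by (rule Bochner_Integration.integral_cong) (auto simp: Pf_ind[OF _ A] psi_def split: split_indicator)
    also have "\<dots> = enn2real (\<integral>\<^sup>+t. ennreal (exp (-\<alpha>*t) * psi A (t + 0) x * indicator {0..} t) \<partial>lborel)"
      by (rule integral_eq_nn_integral) (use psi_sec_t[OF A] in \<open>auto simp: psi_nn\<close>)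
    also have "\<dots> = enn2real (Vx A 0 x)"
      unfolding Vx_def by (rule arg_cong[where f=enn2real], rule nn_integral_cong) (simp split: split_indicator)
    finally show ?thesis .
  qed
  have "Mf (indicator A) = (\<integral>x. enn2real (Vx A 0 x) \<partial>\<mu>)" unfolding Mf_def r ..
  also have "\<dots> = enn2real (\<integral>\<^sup>+x. ennreal (enn2real (Vx A 0 x)) \<partial>\<mu>)"
    by (rule integral_eq_nn_integral) (use Vx_meas[OF A] in auto)
  also have "\<dots> = enn2real (MV A 0)" using MV_eq[OF A] Vx_fin by simp
  finally show ?thesis .
qed

lemma Hn_le: "0 \<le> T \<Longrightarrow> Hn C T \<le> ennreal T"
proof -
  assume T: "0 \<le> T"
  have "Hn C T \<le> (\<integral>\<^sup>+v. indicator {0..T} v \<partial>lborel)"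
    unfolding Hn_def by (intro nn_integral_mono) (use Gam_le1 in \<open>auto split: split_indicator\<close>)
  then show ?thesis using T by simp
qed

lemma cesaro_eq: "C \<in> sets borel \<Longrightarrow> 0 < T \<Longrightarrow> cesaro P \<mu> T C = (1/T) * enn2real (Hn C T)"
proof -
  assume C: "C \<in> sets borel" and T: "0 < T"
  have i: "(\<integral>x. Pf P s (indicator C) x \<partial>\<mu>) = enn2real (Gam C s)" if s: "0 \<le> s" for s
  proof -
    have "(\<integral>x. Pf P s (indicator C) x \<partial>\<mu>) = (\<integral>x. psi C s x \<partial>\<mu>)"
      by (rule Bochner_Integration.integral_cong) (auto simp: Pf_ind[OF s C] psi_def s)
    also have "\<dots> = enn2real (Gam C s)"
      unfolding Gam_def by (rule integral_eq_nn_integral) (use psi_sec_x[OF C] in \<open>auto simp: psi_nn\<close>)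
    finally show ?thesis .
  qed
  have Gfin: "Gam C v < \<infinity>" for v using Gam_le1[of C v] by (simp add: le_less_trans)
  have "(LBINT s:{0..T}. (\<integral>x. Pf P s (indicator C) x \<partial>\<mu>)) = (\<integral>s. enn2real (Gam C s) * indicator {0..T} s \<partial>lborel)"
    unfolding set_lebesgue_integral_def by (rule Bochner_Integration.integral_cong) (auto simp: i split: split_indicator)
  also have "\<dots> = enn2real (\<integral>\<^sup>+s. ennreal (enn2real (Gam C s) * indicator {0..T} s) \<partial>lborel)"
    by (rule integral_eq_nn_integral) (use Gam_meas[OF C] in auto)
  also have "\<dots> = enn2real (Hn C T)"
    unfolding Hn_def by (rule arg_cong[where f=enn2real], rule nn_integral_cong) (use Gfin in \<open>simp split: split_indicator\<close>)
  finally show ?thesis unfolding cesaro_def by simp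
qed

definition Qn :: "real \<Rightarrow> 'a set \<Rightarrow> ennreal" where
  "Qn s C = (\<integral>\<^sup>+u. MV C u * indicator {0..s} u \<partial>lborel)"

lemma pair_lb_lb: "pair_sigma_finite lborel lborel"
  by (intro pair_sigma_finite.intro lborel.sigma_finite_measure_axioms)

lemma Gam_shift_le: "C \<in> sets borel \<Longrightarrow> 0 \<le> t \<Longrightarrow> t \<le> T \<Longrightarrow>
   (\<integral>\<^sup>+u. Gam C (t + u) * indicator {0..s} u \<partial>lborel) \<le> Hn C (s + T)"
proof -
  assume C: "C \<in> sets borel" and t: "0 \<le> t" "t \<le> T"
  note Gm[measurable] = Gam_meas[OF C]
  have "(\<integral>\<^sup>+u. Gam C (t + u) * indicator {0..s} u \<partial>lborel)
      = (\<integral>\<^sup>+v. Gam C (t + (-t + v)) * indicator {0..s} (-t + v) \<partial>lborel)"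
    by (rule shift) measurable
  also have "\<dots> \<le> Hn C (s + T)"
    unfolding Hn_def by (intro nn_integral_mono) (use t in \<open>auto split: split_indicator\<close>)
  finally show ?thesis .
qed

lemma Gam_int_le: "(\<integral>\<^sup>+u. Gam C (t + u) * indicator {0..s} u \<partial>lborel) \<le> ennreal (max s 0)"
proof -
  have "(\<integral>\<^sup>+u. Gam C (t + u) * indicator {0..s} u \<partial>lborel) \<le> (\<integral>\<^sup>+u. indicator {0..s} u \<partial>lborel)"
    by (intro nn_integral_mono) (use Gam_le1 in \<open>auto split: split_indicator\<close>)
  then show ?thesis by (cases "0 \<le> s") auto
qed

lemma QK: "C \<in> sets borel \<Longrightarrow> 0 \<le> s \<Longrightarrow> 0 \<le> T \<Longrightarrow>
   Qn s C \<le> ennreal T * Hn C (s + T) + ennreal (s * exp (-\<alpha>*T) / \<alpha>)"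
proof -
  assume C: "C \<in> sets borel" and s: "0 \<le> s" and T: "0 \<le> T"
  note Gm[measurable] = Gam_meas[OF C]
  define X where "X t = (\<integral>\<^sup>+u. Gam C (t + u) * indicator {0..s} u \<partial>lborel)" for t
  have "Qn s C = (\<integral>\<^sup>+u. (\<integral>\<^sup>+t. ennreal (exp (-\<alpha>*t)) * indicator {0..} t * Gam C (t + u) * indicator {0..s} u \<partial>lborel) \<partial>lborel)"
    unfolding Qn_def MV_def by (intro nn_integral_cong nn_integral_multc[symmetric]) measurable
  also have "\<dots> = (\<integral>\<^sup>+t. (\<integral>\<^sup>+u. ennreal (exp (-\<alpha>*t)) * indicator {0..} t * Gam C (t + u) * indicator {0..s} u \<partial>lborel) \<partial>lborel)"
    by (rule pair_sigma_finite.Fubini'[OF pair_lb_lb]) measurable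
  also have "\<dots> = (\<integral>\<^sup>+t. ennreal (exp (-\<alpha>*t)) * indicator {0..} t * X t \<partial>lborel)"
    unfolding X_def by (intro nn_integral_cong) (simp add: mult.assoc nn_integral_cmult[symmetric])
  also have "\<dots> \<le> (\<integral>\<^sup>+t. indicator {0..T} t * Hn C (s + T) + ennreal s * (ennreal (exp (-\<alpha>*t)) * indicator {T..} t) \<partial>lborel)"
  proof (intro nn_integral_mono)
    fix t :: real
    show "ennreal (exp (-\<alpha>*t)) * indicator {0..} t * X t \<le> indicator {0..T} t * Hn C (s + T) + ennreal s * (ennreal (exp (-\<alpha>*t)) * indicator {T..} t)"
    proof (cases "0 \<le> t")
      case False then show ?thesis by simp
    next
      case True
      show ?thesis
      proof (cases "t \<le> T")
        case True
        have "ennreal (exp (-\<alpha>*t)) * indicator {0..} t * X t \<le> 1 * X t"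
          using \<open>0 \<le> t\<close> apos by (intro mult_right_mono) (auto simp: indicator_def)
        also have "\<dots> \<le> Hn C (s + T)" unfolding X_def using Gam_shift_le[OF C \<open>0 \<le> t\<close> True] by simp
        also have "\<dots> \<le> indicator {0..T} t * Hn C (s + T) + ennreal s * (ennreal (exp (-\<alpha>*t)) * indicator {T..} t)"
          using \<open>0 \<le> t\<close> True by (simp add: indicator_def)
        finally show ?thesis .
      next
        case False
        have "ennreal (exp (-\<alpha>*t)) * indicator {0..} t * X t \<le> ennreal (exp (-\<alpha>*t)) * 1 * ennreal s"
          using \<open>0 \<le> t\<close> Gam_int_le[of C t s] s unfolding X_def
          by (intro mult_mono) (auto simp: indicator_def)
        also have "\<dots> \<le> indicator {0..T} t * Hn C (s + T) + ennreal s * (ennreal (exp (-\<alpha>*t)) * indicator {T..} t)"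
          using False by (simp add: indicator_def mult.commute)
        finally show ?thesis .
      qed
    qed
  qed
  also have "\<dots> = (\<integral>\<^sup>+t. Hn C (s + T) * indicator {0..T} t \<partial>lborel) + (\<integral>\<^sup>+t. ennreal s * (ennreal (exp (-\<alpha>*t)) * indicator {T..} t) \<partial>lborel)"
    by (subst nn_integral_add) (auto simp: mult.commute)
  also have "\<dots> = ennreal T * Hn C (s + T) + ennreal (s * exp (-\<alpha>*T) / \<alpha>)"
  proof -
    have i1: "(\<integral>\<^sup>+t. Hn C (s + T) * indicator {0..T} t \<partial>lborel) = Hn C (s + T) * ennreal T"
      using T by (subst nn_integral_cmult_indicator) auto
    have i2: "(\<integral>\<^sup>+t. ennreal s * (ennreal (exp (-\<alpha>*t)) * indicator {T..} t) \<partial>lborel) = ennreal s * ennreal (exp (-\<alpha>*T) / \<alpha>)"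
      using exp_tail[of T] by (subst nn_integral_cmult) auto
    have i3: "ennreal s * ennreal (exp (-\<alpha>*T) / \<alpha>) = ennreal (s * exp (-\<alpha>*T) / \<alpha>)"
      using s apos by (simp add: ennreal_mult[symmetric])
    show ?thesis unfolding i1 i2 i3 by (simp add: mult.commute)
  qed
  finally show ?thesis .
qed

lemma Hn_mono: "y \<le> y' \<Longrightarrow> Hn C y \<le> Hn C y'"
  unfolding Hn_def by (intro nn_integral_mono) (auto split: split_indicator)

lemma Hn_add: "C \<in> sets borel \<Longrightarrow> 0 \<le> y \<Longrightarrow> 0 \<le> T \<Longrightarrow> Hn C (y + T) \<le> Hn C y + ennreal T"
proof -
  assume C: "C \<in> sets borel" and y: "0 \<le> y" and T: "0 \<le> T"
  note Gm[measurable] = Gam_meas[OF C]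
  have "Hn C (y + T) \<le> (\<integral>\<^sup>+v. Gam C v * indicator {0..y} v + indicator {y..y+T} v \<partial>lborel)"
    unfolding Hn_def by (intro nn_integral_mono) (use Gam_le1 in \<open>auto split: split_indicator\<close>)
  also have "\<dots> = Hn C y + ennreal T"
    unfolding Hn_def using T by (subst nn_integral_add) auto
  finally show ?thesis .
qed

lemma psi_sec_b: "A \<in> sets borel \<Longrightarrow> (\<lambda>x. psi A t x) \<in> borel_measurable borel"
proof -
  assume A: "A \<in> sets borel"
  have "(\<lambda>(t, x). psi A t x) \<in> borel_measurable (borel \<Otimes>\<^sub>M borel)" using psi_meas_borel[OF A] by simp
  from measurable_compose[OF measurable_Pair1'[of t borel borel] this] show ?thesis by simp
qed

lemma psi_split:
  assumes C: "C \<in> sets borel" and B: "B \<in> sets borel" and Kc: "- K \<in> sets borel"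
    and hd: "\<forall>y\<in>K. psi C 1 y \<le> psi B 1 y + d" and d: "0 \<le> d" and v: "1 \<le> v"
  shows "psi C v x \<le> psi B v x + d + psi (- K) (v - 1) x"
proof -
  define w where "w = v - 1"
  have w: "0 \<le> w" using v by (simp add: w_def)
  have vw: "v = w + 1" by (simp add: w_def)
  interpret prob_space "P w x" using ps[OF w] .
  have meas: "(\<lambda>y. psi D 1 y) \<in> borel_measurable (P w x)" if "D \<in> sets borel" for D
    using psi_sec_b[OF that, of 1] measurable_cong_sets[OF sP[OF w] refl] by blast
  have int: "integrable (P w x) (\<lambda>y. psi D 1 y)" if "D \<in> sets borel" for D
    by (rule integrable_const_bound[where B=1]) (auto simp: psi_nn psi_le1 meas[OF that])
  have e: "psi D v x = (\<integral>y. psi D 1 y \<partial>(P w x))" if "D \<in> sets borel" for D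
  proof -
    have "psi D v x = measure (P (w + 1) x) D" using v w by (simp add: psi_def vw)
    also have "\<dots> = (\<integral>y. measure (P 1 y) D \<partial>(P w x))" by (rule CK[OF _ w that]) simp
    also have "\<dots> = (\<integral>y. psi D 1 y \<partial>(P w x))" by (simp add: psi_def)
    finally show ?thesis .
  qed
  have intK: "integrable (P w x) (indicator (- K) :: 'a \<Rightarrow> real)"
  proof (rule integrable_const_bound[where B=1])
    show "(indicator (- K) :: 'a \<Rightarrow> real) \<in> borel_measurable (P w x)"
      by (rule borel_measurable_indicator) (use Kc sP[OF w] in simp)
  qed (auto simp: indicator_def)
  have "psi C v x = (\<integral>y. psi C 1 y \<partial>(P w x))" by (rule e[OF C])
  also have "\<dots> \<le> (\<integral>y. psi B 1 y + d + indicator (- K) y \<partial>(P w x))"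
  proof (rule integral_mono)
    show "integrable (P w x) (\<lambda>y. psi C 1 y)" by (rule int[OF C])
    show "integrable (P w x) (\<lambda>y. psi B 1 y + d + indicator (- K) y)"
      using int[OF B] intK by auto
    fix y
    show "psi C 1 y \<le> psi B 1 y + d + indicator (- K) y"
    proof (cases "y \<in> K")
      case True then show ?thesis using hd by auto
    next
      case False then show ?thesis using psi_le1[of C 1 y] psi_nn[of B 1 y] d by simp
    qed
  qed
  also have "\<dots> = (\<integral>y. psi B 1 y \<partial>(P w x)) + d + measure (P w x) (- K)"
    using int[OF B] intK spP[OF w] prob_space by simp
  also have "\<dots> = psi B v x + d + psi (- K) (v - 1) x"
    using e[OF B] w by (simp add: psi_def w_def)
  finally show ?thesis .
qed

lemma Gam_mono: "C \<subseteq> D \<Longrightarrow> D \<in> sets borel \<Longrightarrow> Gam C v \<le> Gam D v"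
  unfolding Gam_def by (intro nn_integral_mono ennreal_leI psi_mono)

lemma MV_mono: "C \<subseteq> D \<Longrightarrow> D \<in> sets borel \<Longrightarrow> MV C u \<le> MV D u"
  unfolding MV_def by (intro nn_integral_mono mult_left_mono Gam_mono) auto

lemma Gam_split:
  assumes C: "C \<in> sets borel" and B: "B \<in> sets borel" and Kc: "- K \<in> sets borel"
    and hd: "\<forall>y\<in>K. psi C 1 y \<le> psi B 1 y + d" and d: "0 \<le> d" and v: "1 \<le> v"
  shows "Gam C v \<le> Gam B v + ennreal d + Gam (- K) (v - 1)"
proof -
  have "Gam C v \<le> (\<integral>\<^sup>+x. ennreal (psi B v x) + ennreal d + ennreal (psi (- K) (v - 1) x) \<partial>\<mu>)"
    unfolding Gam_def
  proof (intro nn_integral_mono)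
    fix x
    have "ennreal (psi C v x) \<le> ennreal (psi B v x + d + psi (- K) (v - 1) x)"
      by (rule ennreal_leI[OF psi_split[OF C B Kc hd d v]])
    also have "\<dots> = ennreal (psi B v x) + ennreal d + ennreal (psi (- K) (v - 1) x)"
      using d by (simp add: psi_nn ennreal_plus)
    finally show "ennreal (psi C v x) \<le> ennreal (psi B v x) + ennreal d + ennreal (psi (- K) (v - 1) x)" .
  qed
  also have "\<dots> = Gam B v + ennreal d + Gam (- K) (v - 1)"
    unfolding Gam_def using psi_sec_x[OF B] psi_sec_x[OF Kc] pr
    by (simp add: nn_integral_add prob_space.emeasure_space_1)
  finally show ?thesis .
qed

lemma MV_split:
  assumes C: "C \<in> sets borel" and B: "B \<in> sets borel" and Kc: "- K \<in> sets borel"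
    and hd: "\<forall>y\<in>K. psi C 1 y \<le> psi B 1 y + d" and d: "0 \<le> d" and u: "1 \<le> u"
  shows "MV C u \<le> MV B u + ennreal (d / \<alpha>) + MV (- K) (u - 1)"
proof -
  note Gm[measurable] = Gam_meas[OF B] Gam_meas[OF Kc]
  have "MV C u \<le> (\<integral>\<^sup>+t. ennreal (exp (-\<alpha>*t)) * indicator {0..} t * Gam B (t + u)
      + ennreal d * (ennreal (exp (-\<alpha>*t)) * indicator {0..} t)
      + ennreal (exp (-\<alpha>*t)) * indicator {0..} t * Gam (- K) (t + (u - 1)) \<partial>lborel)"
    unfolding MV_def
  proof (intro nn_integral_mono)
    fix t :: real
    show "ennreal (exp (-\<alpha>*t)) * indicator {0..} t * Gam C (t + u) \<le> ennreal (exp (-\<alpha>*t)) * indicator {0..} t * Gam B (t + u)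
      + ennreal d * (ennreal (exp (-\<alpha>*t)) * indicator {0..} t)
      + ennreal (exp (-\<alpha>*t)) * indicator {0..} t * Gam (- K) (t + (u - 1))"
    proof (cases "0 \<le> t")
      case True
      have g: "Gam C (t + u) \<le> Gam B (t + u) + ennreal d + Gam (- K) (t + (u - 1))"
        using Gam_split[OF C B Kc hd d, of "t + u"] True u by (simp add: algebra_simps)
      have "ennreal (exp (-\<alpha>*t)) * indicator {0..} t * Gam C (t + u)
          \<le> ennreal (exp (-\<alpha>*t)) * indicator {0..} t * (Gam B (t + u) + ennreal d + Gam (- K) (t + (u - 1)))"
        by (rule mult_left_mono[OF g]) simp
      then show ?thesis by (simp add: distrib_left mult_ac)
    qed simp
  qed
  also have "\<dots> = MV B u + ennreal d * ennreal (1/\<alpha>) + MV (- K) (u - 1)"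
    unfolding MV_def using exp_int by (simp add: nn_integral_add nn_integral_cmult)
  also have "ennreal d * ennreal (1/\<alpha>) = ennreal (d / \<alpha>)"
    using d apos by (simp add: ennreal_mult[symmetric])
  finally show ?thesis .
qed

lemma psi_cont: "C \<in> sets borel \<Longrightarrow> continuous_on UNIV (\<lambda>y. psi C 1 y)"
proof -
  assume C: "C \<in> sets borel"
  have "(\<lambda>y. psi C 1 y) = Pf P 1 (indicator C)" by (rule ext) (simp add: psi_def Pf_ind[OF _ C])
  then show ?thesis using sfe[of 1 "indicator C"] C bounded_indicator[of C] by simp
qed

lemma geo2: "(\<Sum>i. ennreal ((1/2::real)^(i + j))) = ennreal (2 * (1/2)^j)"
proof -
  have e: "(\<lambda>i. (1/2::real)^(i + j)) = (\<lambda>i. (1/2)^j * (1/2)^i)" by (rule ext) (simp add: power_add)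
  have sm: "summable (\<lambda>i. (1/2::real)^(i + j))" unfolding e by (intro summable_mult summable_geometric) simp
  have "(\<Sum>i. ennreal ((1/2::real)^(i + j))) = ennreal (\<Sum>i. (1/2::real)^(i + j))"
    by (rule suminf_ennreal2) (use sm in auto)
  also have "(\<Sum>i. (1/2::real)^(i + j)) = (1/2)^j * (\<Sum>i. (1/2)^i)"
    unfolding e by (rule suminf_mult) (rule summable_geometric, simp)
  also have "(\<Sum>i. (1/2::real)^i) = 2" using suminf_geometric[of "1/2::real"] by simp
  finally show ?thesis by (simp add: mult.commute)
qed

lemma main_bound:
  assumes A: "\<And>j. A j \<in> sets borel" and small: "\<And>j. MV (A j) 0 \<le> ennreal ((1/2)^j)"
    and K: "compact K" and d: "0 < d"
  shows "\<exists>J. \<forall>j\<ge>J. \<forall>s\<ge>0. Qn s (A j) \<le> ennreal (exp \<alpha> * (1/2)^j) + ennreal (s * d / \<alpha>) + Qn s (- K)"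
proof -
  define Bj where "Bj j = (\<Union>i. A (i + j))" for j
  define B where "B = (\<Inter>j. Bj j)"
  have Bjb: "Bj j \<in> sets borel" for j unfolding Bj_def using A by auto
  have Bb: "B \<in> sets borel" unfolding B_def using Bjb by auto
  have Kc: "- K \<in> sets borel" using compact_imp_closed[OF K] by (intro borel_open) auto
  have AB: "A j \<subseteq> Bj j" for j unfolding Bj_def by (auto intro!: exI[of _ 0])
  have BBj: "B \<subseteq> Bj j" for j unfolding B_def by auto
  have MVBj: "MV (Bj j) 0 \<le> ennreal (2 * (1/2)^j)" for j
  proof -
    have "MV (Bj j) 0 \<le> (\<Sum>i. MV (A (i + j)) 0)" unfolding Bj_def by (rule MV_union) (rule A)
    also have "\<dots> \<le> (\<Sum>i. ennreal ((1/2::real)^(i + j)))"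
      by (intro suminf_le summableI) (rule small)
    also have "\<dots> = ennreal (2 * (1/2)^j)" by (rule geo2)
    finally show ?thesis .
  qed
  have MVB0: "MV B 0 = 0"
  proof -
    have le: "enn2real (MV B 0) \<le> 2 * (1/2)^j" for j
      by (rule enn2real_leI) (use MV_mono[OF BBj[of j] Bjb[of j], of 0] MVBj[of j] in auto)
    have t: "(\<lambda>j. 2 * (1/2::real)^j) \<longlonglongrightarrow> 0"
      using tendsto_mult[OF tendsto_const[of "2::real"] LIMSEQ_power_zero[of "1/2::real"]] by simp
    have "enn2real (MV B 0) \<le> 0" by (rule LIMSEQ_le_const[OF t]) (use le in auto)
    then have "enn2real (MV B 0) = 0" using enn2real_nonneg[of "MV B 0"] by linarith
    then show ?thesis using ennreal_enn2real[OF MV_fin[of B 0]] by simp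
  qed
  have MVB: "MV B u = 0" if "0 \<le> u" for u
    using MV_shift[OF Bb that] MVB0 by simp
  define g where "g j y = psi (Bj j) 1 y - psi B 1 y" for j y
  have gc: "continuous_on UNIV (g j)" for j
    unfolding g_def by (intro continuous_on_diff psi_cont Bjb Bb)
  have dec: "Bj (Suc j) \<subseteq> Bj j" for j
  proof
    fix y assume "y \<in> Bj (Suc j)"
    then obtain i where "y \<in> A (i + Suc j)" unfolding Bj_def by auto
    then have "y \<in> A (Suc i + j)" by simp
    then show "y \<in> Bj j" unfolding Bj_def by blast
  qed
  have gdec: "g (Suc j) y \<le> g j y" for j y
    unfolding g_def using psi_mono[OF dec[of j] Bjb[of j]] by simp
  have glim: "(\<lambda>j. g j y) \<longlonglongrightarrow> 0" for y
  proof -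
    interpret prob_space "P 1 y" using ps[of 1] by simp
    have "(\<lambda>j. measure (P 1 y) (Bj j)) \<longlonglongrightarrow> measure (P 1 y) (\<Inter>j. Bj j)"
      by (rule finite_Lim_measure_decseq) (use Bjb sP[of 1 y] in auto, rule decseq_SucI, rule dec)
    then have "(\<lambda>j. psi (Bj j) 1 y) \<longlonglongrightarrow> psi B 1 y" by (simp add: psi_def B_def)
    from tendsto_diff[OF this tendsto_const[of "psi B 1 y"]] show ?thesis by (simp add: g_def)
  qed
  obtain J where J: "\<And>j x. j \<ge> J \<Longrightarrow> x \<in> K \<Longrightarrow> g j x < d"
    using dini[OF K gc gdec glim d] by blast
  show ?thesis
  proof (intro exI[of _ J] allI impI)
    fix j s assume j: "J \<le> j" and s: "0 \<le> (s::real)"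
    have hd: "\<forall>y\<in>K. psi (Bj j) 1 y \<le> psi B 1 y + d"
      using J[OF j] unfolding g_def by (smt (verit))
    note Mm[measurable] = MV_meas[OF A[of j]] MV_meas[OF Kc]
    have "Qn s (A j) \<le> (\<integral>\<^sup>+u. ennreal (exp \<alpha> * (1/2)^j) * indicator {0..1} u + ennreal (d / \<alpha>) * indicator {0..s} u
          + MV (- K) (u - 1) * indicator {1..s+1} u \<partial>lborel)"
      unfolding Qn_def
    proof (intro nn_integral_mono)
      fix u :: real
      show "MV (A j) u * indicator {0..s} u \<le> ennreal (exp \<alpha> * (1/2)^j) * indicator {0..1} u + ennreal (d / \<alpha>) * indicator {0..s} u
          + MV (- K) (u - 1) * indicator {1..s+1} u"
      proof (cases "u \<in> {0..s}")
        case False then show ?thesis by simp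
      next
        case us: True
        show ?thesis
        proof (cases "u \<le> 1")
          case True
          have "MV (A j) u \<le> ennreal (exp (\<alpha>*u)) * MV (A j) 0" using MV_shift[OF A] us by simp
          also have "\<dots> \<le> ennreal (exp \<alpha>) * ennreal ((1/2)^j)"
            using True apos by (intro mult_mono ennreal_leI small) auto
          also have "\<dots> = ennreal (exp \<alpha> * (1/2)^j)" by (simp add: ennreal_mult)
          finally show ?thesis using us True by (simp add: add.assoc add_increasing2)
        next
          case False
          have "MV (A j) u \<le> MV (Bj j) u" by (rule MV_mono[OF AB Bjb])
          also have "\<dots> \<le> MV B u + ennreal (d / \<alpha>) + MV (- K) (u - 1)"
            by (rule MV_split[OF Bjb Bb Kc hd]) (use d False in auto)
          also have "\<dots> = ennreal (d / \<alpha>) + MV (- K) (u - 1)" using MVB[of u] us by simp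
          finally show ?thesis using us False
            by (simp add: indicator_def add_increasing)
        qed
      qed
    qed
    also have "\<dots> = ennreal (exp \<alpha> * (1/2)^j) + ennreal (s * d / \<alpha>) + (\<integral>\<^sup>+u. MV (- K) (u - 1) * indicator {1..s+1} u \<partial>lborel)"
    proof -
      have "ennreal (d / \<alpha>) * ennreal s = ennreal (s * d / \<alpha>)"
        using d s apos by (simp add: ennreal_mult[symmetric] mult.commute)
      then show ?thesis using s by (simp add: nn_integral_add nn_integral_cmult_indicator)
    qed
    also have "(\<integral>\<^sup>+u. MV (- K) (u - 1) * indicator {1..s+1} u \<partial>lborel) = Qn s (- K)"
    proof -
      have "(\<integral>\<^sup>+u. MV (- K) (u - 1) * indicator {1..s+1} u \<partial>lborel)
          = (\<integral>\<^sup>+w. MV (- K) ((1 + w) - 1) * indicator {1..s+1} (1 + w) \<partial>lborel)"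
        by (rule shift) measurable
      also have "\<dots> = Qn s (- K)" unfolding Qn_def
        by (intro nn_integral_cong) (simp split: split_indicator)
      finally show ?thesis .
    qed
    finally show "Qn s (A j) \<le> ennreal (exp \<alpha> * (1/2)^j) + ennreal (s * d / \<alpha>) + Qn s (- K)" .
  qed
qed

lemma Qn_fin: "0 \<le> s \<Longrightarrow> Qn s C < top"
proof -
  assume s: "0 \<le> s"
  have "Qn s C \<le> (\<integral>\<^sup>+u. ennreal (1/\<alpha>) * indicator {0..s} u \<partial>lborel)"
    unfolding Qn_def by (intro nn_integral_mono) (use MV_le in \<open>auto split: split_indicator\<close>)
  also have "\<dots> = ennreal (1/\<alpha>) * ennreal s" using s by (simp add: nn_integral_cmult_indicator)
  finally show ?thesis by (simp add: le_less_trans ennreal_mult_less_top)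
qed

lemma tn_ge: "tn 0 \<le> tn n"
  using tmono by (simp add: mono_def)

lemma key: "0 < \<eta> \<Longrightarrow> \<exists>\<delta>>0. \<forall>A\<in>sets borel. Mf (indicator A) \<le> \<delta> \<longrightarrow> (\<forall>n. q (tn n) A \<le> \<eta>)"
proof (rule ccontr)
  assume eta: "0 < \<eta>" and neg: "\<not> (\<exists>\<delta>>0. \<forall>A\<in>sets borel. Mf (indicator A) \<le> \<delta> \<longrightarrow> (\<forall>n. q (tn n) A \<le> \<eta>))"
  have "\<forall>j. \<exists>A n. A \<in> sets borel \<and> Mf (indicator A) \<le> (1/2)^j \<and> \<eta> < q (tn n) A"
  proof
    fix j :: nat
    have p: "(0::real) < (1/2)^j" by simp
    have "\<forall>\<delta>>0. \<exists>A\<in>sets borel. Mf (indicator A) \<le> \<delta> \<and> (\<exists>n. \<eta> < q (tn n) A)"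
      using neg by (auto simp: not_le)
    from this[rule_format, OF p]
    show "\<exists>A n. A \<in> sets borel \<and> Mf (indicator A) \<le> (1/2)^j \<and> \<eta> < q (tn n) A" by blast
  qed
  then obtain A nn where A: "\<And>j. A j \<in> sets borel" and Asm: "\<And>j. Mf (indicator (A j)) \<le> (1/2)^j"
    and Aq: "\<And>j. \<eta> < q (tn (nn j)) (A j)"
    by metis
  have small: "MV (A j) 0 \<le> ennreal ((1/2)^j)" for j
  proof -
    have "ennreal (enn2real (MV (A j) 0)) \<le> ennreal ((1/2)^j)"
      using Asm[of j] Mf_ind[OF A] by (intro ennreal_leI) simp
    then show ?thesis by (simp only: ennreal_enn2real[OF MV_fin])
  qed
  define t0 where "t0 = tn 0"
  have t0: "0 < t0" using tpos by (simp add: t0_def)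
  have tnt0: "t0 \<le> tn n" for n unfolding t0_def by (rule tn_ge)
  define T where "T = \<bar>ln (9 / (\<alpha> * \<eta>))\<bar> / \<alpha>"
  have T0: "0 \<le> T" unfolding T_def using apos by simp
  have eT: "exp (-\<alpha>*T) / \<alpha> \<le> \<eta> / 9"
  proof -
    have "ln (9 / (\<alpha> * \<eta>)) \<le> \<alpha> * T" unfolding T_def using apos by simp
    then have "-\<alpha>*T \<le> ln (\<alpha> * \<eta> / 9)" using apos eta by (simp add: ln_div)
    then have "exp (-\<alpha>*T) \<le> \<alpha> * \<eta> / 9" using apos eta
      by (metis exp_le_cancel_iff exp_ln divide_pos_pos mult_pos_pos zero_less_numeral)
    then show ?thesis using apos by (simp add: field_simps)
  qed
  define S where "S = 9 * T * T / \<eta> + 1"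
  have S0: "0 < S" proof -
    have "0 \<le> 9 * T * T / \<eta>" using eta T0 by simp
    then show ?thesis unfolding S_def by linarith
  qed
  have TTS: "T * T \<le> \<eta> / 9 * S" unfolding S_def using eta by (simp add: field_simps)
  obtain M where M: "S + T \<le> tn M"
    using tlim unfolding filterlim_at_top eventually_sequentially by blast
  have tM: "0 < tn M" using tpos by simp
  define D where "D = 9 * (T + 1) * (tn M + t0)"
  have D0: "0 < D" unfolding D_def using T0 tM t0 by simp
  define \<epsilon> where "\<epsilon> = \<eta> * t0 / D"
  have eps0: "0 < \<epsilon>" unfolding \<epsilon>_def using eta t0 D0 by simp
  have epsD: "\<epsilon> * D = \<eta> * t0" unfolding \<epsilon>_def using D0 by simp
  have ineq0: "9 * (T * \<epsilon>) * (tn M + t0) \<le> 9 * ((T + 1) * \<epsilon>) * (tn M + t0)"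
    using eps0 tM t0 by (intro mult_right_mono mult_left_mono) auto
  have epsA: "T * \<epsilon> \<le> \<eta> / 9"
  proof -
    note ineq0
    also have "\<dots> = \<eta> * t0" using epsD unfolding D_def by (simp add: algebra_simps)
    also have "\<dots> \<le> \<eta> * (tn M + t0)" using eta tM by simp
    finally have "9 * (T * \<epsilon>) * (tn M + t0) \<le> \<eta> * (tn M + t0)" .
    then have "9 * (T * \<epsilon>) \<le> \<eta>" using tM t0 by (simp add: mult_le_cancel_right)
    then show ?thesis by simp
  qed
  have epsB: "T * (tn M * \<epsilon>) \<le> \<eta> / 9 * t0"
  proof -
    have "9 * (T * (tn M * \<epsilon>)) * (tn M + t0) = 9 * (T * \<epsilon>) * (tn M + t0) * tn M"
      by (simp only: mult_ac)
    also have "\<dots> \<le> 9 * ((T + 1) * \<epsilon>) * (tn M + t0) * tn M"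
      using tM by (intro mult_right_mono[OF ineq0]) simp
    also have "\<dots> = \<eta> * t0 * tn M" using epsD unfolding D_def by (simp add: algebra_simps)
    also have "\<dots> \<le> \<eta> * t0 * (tn M + t0)" using eta t0 by simp
    finally have "9 * (T * (tn M * \<epsilon>)) * (tn M + t0) \<le> \<eta> * t0 * (tn M + t0)" .
    then have "9 * (T * (tn M * \<epsilon>)) \<le> \<eta> * t0" using tM t0 by (simp add: mult_le_cancel_right)
    then show ?thesis by simp
  qed
  obtain K where K: "compact K" and Kt: "\<And>n. cesaro P \<mu> (tn n) (- K) \<le> \<epsilon>"
    using tight eps0 unfolding tight_family_def by blast
  have Kc: "- K \<in> sets borel" using compact_imp_closed[OF K] by (intro borel_open) auto
  have Hb: "Hn (- K) (tn n) \<le> ennreal (tn n * \<epsilon>)" for n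
  proof -
    have p: "0 < tn n" using tpos by simp
    have "(1 / tn n) * enn2real (Hn (- K) (tn n)) \<le> \<epsilon>" using Kt[of n] cesaro_eq[OF Kc p] by simp
    then have "enn2real (Hn (- K) (tn n)) \<le> tn n * \<epsilon>" using p by (simp add: field_simps)
    then have "ennreal (enn2real (Hn (- K) (tn n))) \<le> ennreal (tn n * \<epsilon>)" by (rule ennreal_leI)
    moreover have "Hn (- K) (tn n) < top" using Hn_le[of "tn n" "- K"] p by (simp add: le_less_trans)
    ultimately show ?thesis by simp
  qed
  have QKb: "enn2real (Qn (tn n) (- K)) \<le> \<eta> / 3 * tn n" for n
  proof -
    define s where "s = tn n"
    have s: "0 < s" "t0 \<le> s" using tpos tnt0 by (auto simp: s_def)
    define X where "X = (if S \<le> s then s * \<epsilon> + T else tn M * \<epsilon>)"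
    have HX: "Hn (- K) (s + T) \<le> ennreal X"
    proof (cases "S \<le> s")
      case True
      have "Hn (- K) (s + T) \<le> Hn (- K) s + ennreal T" by (rule Hn_add[OF Kc]) (use s T0 in auto)
      also have "\<dots> \<le> ennreal (s * \<epsilon>) + ennreal T" using Hb[of n] by (simp add: s_def add_right_mono)
      also have "\<dots> = ennreal X" using True s eps0 T0 by (simp add: X_def ennreal_plus)
      finally show ?thesis .
    next
      case False
      have "Hn (- K) (s + T) \<le> Hn (- K) (tn M)" by (rule Hn_mono) (use False M in auto)
      also have "\<dots> \<le> ennreal X" using Hb[of M] False by (simp add: X_def)
      finally show ?thesis .
    qed
    have X0: "0 \<le> X" unfolding X_def using s eps0 T0 tM by auto
    have "Qn s (- K) \<le> ennreal T * Hn (- K) (s + T) + ennreal (s * exp (-\<alpha>*T) / \<alpha>)"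
      by (rule QK[OF Kc]) (use s T0 in auto)
    also have "\<dots> \<le> ennreal T * ennreal X + ennreal (s * exp (-\<alpha>*T) / \<alpha>)"
      by (intro add_right_mono mult_left_mono HX) auto
    also have "\<dots> = ennreal (T * X + s * exp (-\<alpha>*T) / \<alpha>)"
    proof -
      have "ennreal T * ennreal X = ennreal (T * X)" using T0 X0 by (rule ennreal_mult[symmetric])
      moreover have "ennreal (T * X) + ennreal (s * exp (-\<alpha>*T) / \<alpha>) = ennreal (T * X + s * exp (-\<alpha>*T) / \<alpha>)"
        using T0 X0 s apos by (intro ennreal_plus[symmetric]) auto
      ultimately show ?thesis by simp
    qed
    finally have "enn2real (Qn s (- K)) \<le> T * X + s * exp (-\<alpha>*T) / \<alpha>"
      by (intro enn2real_leI) (use T0 X0 s apos in auto)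
    also have "\<dots> \<le> \<eta> / 3 * s"
    proof -
      have e1: "s * exp (-\<alpha>*T) / \<alpha> \<le> \<eta> / 9 * s"
        using mult_left_mono[OF eT, of s] s by (simp add: field_simps)
      have e2: "T * X \<le> 2 * (\<eta> / 9) * s"
      proof (cases "S \<le> s")
        case True
        have "T * X = s * (T * \<epsilon>) + T * T" using True by (simp add: X_def algebra_simps)
        also have "\<dots> \<le> s * (\<eta> / 9) + \<eta> / 9 * S"
          using mult_left_mono[OF epsA, of s] s TTS by linarith
        also have "\<eta> / 9 * S \<le> \<eta> / 9 * s" using True eta by simp
        finally show ?thesis by simp
      next
        case False
        have "T * X = T * (tn M * \<epsilon>)" using False by (simp add: X_def)
        also have "\<dots> \<le> \<eta> / 9 * t0" by (rule epsB)
        also have "\<dots> \<le> \<eta> / 9 * s" using s eta by simp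
        finally have "T * X \<le> \<eta> / 9 * s" .
        moreover have "0 \<le> \<eta> / 9 * s" using eta s by simp
        ultimately show ?thesis by linarith
      qed
      show ?thesis using e1 e2 by linarith
    qed
    finally show ?thesis by (simp add: s_def)
  qed
  define d where "d = \<alpha> * \<eta> / 4"
  have d0: "0 < d" unfolding d_def using apos eta by simp
  obtain J where J: "\<And>j s. J \<le> j \<Longrightarrow> 0 \<le> s \<Longrightarrow>
      Qn s (A j) \<le> ennreal (exp \<alpha> * (1/2)^j) + ennreal (s * d / \<alpha>) + Qn s (- K)"
    using main_bound[OF A small K d0] by blast
  have p0: "(\<lambda>j. (1/2::real)^j) \<longlonglongrightarrow> 0" by (rule LIMSEQ_power_zero) simp
  have "(\<lambda>j. exp \<alpha> * (1/2::real)^j / t0) \<longlonglongrightarrow> exp \<alpha> * 0 / t0"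
    by (intro tendsto_intros p0) (use t0 in simp)
  then have "(\<lambda>j. exp \<alpha> * (1/2::real)^j / t0) \<longlonglongrightarrow> 0" by simp
  then have "eventually (\<lambda>j. exp \<alpha> * (1/2::real)^j / t0 < \<eta> / 3) sequentially"
    using eta by (intro order_tendstoD) auto
  then obtain N where N: "\<And>j. N \<le> j \<Longrightarrow> exp \<alpha> * (1/2::real)^j / t0 < \<eta> / 3"
    unfolding eventually_sequentially by blast
  define j where "j = max N J"
  define s where "s = tn (nn j)"
  have s: "0 < s" "t0 \<le> s" using tpos tnt0 by (auto simp: s_def)
  have Qj: "Qn s (A j) \<le> ennreal (exp \<alpha> * (1/2)^j) + ennreal (s * d / \<alpha>) + Qn s (- K)"
    using J[of j s] s by (simp add: j_def)
  have fK: "Qn s (- K) < top" using Qn_fin s by simp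
  have "Qn s (A j) \<le> ennreal (exp \<alpha> * (1/2)^j + s * d / \<alpha> + enn2real (Qn s (- K)))"
    using Qj fK s d0 apos by (simp add: ennreal_plus)
  then have "enn2real (Qn s (A j)) \<le> exp \<alpha> * (1/2)^j + s * d / \<alpha> + enn2real (Qn s (- K))"
    by (intro enn2real_leI) (use s d0 apos in auto)
  also have "\<dots> \<le> exp \<alpha> * (1/2)^j + s * d / \<alpha> + \<eta> / 3 * s"
    using QKb[of "nn j"] by (simp add: s_def)
  finally have QA: "enn2real (Qn s (A j)) \<le> exp \<alpha> * (1/2)^j + s * d / \<alpha> + \<eta> / 3 * s" .
  have "q s (A j) \<le> enn2real (Qn s (A j)) / s" using q_le[OF A s(1)] by (simp add: Qn_def)
  also have "\<dots> \<le> (exp \<alpha> * (1/2)^j + s * d / \<alpha> + \<eta> / 3 * s) / s"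
    using QA s by (simp add: divide_right_mono)
  also have "\<dots> = exp \<alpha> * (1/2)^j / s + \<eta> / 4 + \<eta> / 3"
    using s apos unfolding d_def by (simp add: field_simps)
  also have "exp \<alpha> * (1/2)^j / s \<le> exp \<alpha> * (1/2)^j / t0"
    using s t0 by (intro divide_left_mono) auto
  also have "exp \<alpha> * (1/2::real)^j / t0 < \<eta> / 3" using N[of j] by (simp add: j_def)
  finally have "q s (A j) < \<eta>" using eta by linarith
  then show False using Aq[of j] by (simp add: s_def)
qed

lemma q_empty: "q s {} = 0"
  by (simp add: q_def Mf_def resolvent_def Pf_def)

lemma Mf_empty: "Mf (indicator {}) = 0"
  by (simp add: Mf_def resolvent_def Pf_def)

end

theorem proposition3p1:
  fixes P :: "real \<Rightarrow> 'a::polish_space \<Rightarrow> 'a measure"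
    and \<mu> :: "'a measure" and tn :: "nat \<Rightarrow> real"
  assumes "measurable_markov_tf P"
    and "strong_feller P"
    and "prob_space \<mu>" and "sets \<mu> = sets borel"
    and "mono tn" and "filterlim tn at_top sequentially" and "\<forall>n. tn n > 0"
    and "tight_family (\<lambda>n. cesaro P \<mu> (tn n))"
  shows "\<forall>\<alpha>>0. \<exists>r::nat \<Rightarrow> nat. strict_mono r \<and>
           cconst P (\<lambda>f. \<integral>x. resolvent P \<alpha> f x \<partial>\<mu>) (tn \<circ> r) = 0"
proof (intro allI impI)
  fix \<alpha> :: real assume a: "\<alpha> > 0"
  interpret setting P \<mu> tn \<alpha> by (rule setting.intro[OF assms a])
  show "\<exists>r::nat \<Rightarrow> nat. strict_mono r \<and> cconst P (\<lambda>f. \<integral>x. resolvent P \<alpha> f x \<partial>\<mu>) (tn \<circ> r) = 0"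
  proof (intro exI[of _ id] conjI)
    show "strict_mono (id :: nat \<Rightarrow> nat)" by (simp add: strict_mono_def)
    have m: "(\<lambda>f. \<integral>x. resolvent P \<alpha> f x \<partial>\<mu>) = Mf" by (rule ext) (simp add: Mf_def)
    define G where "G \<epsilon> = (SUP A \<in> {A \<in> sets borel. Mf (indicator A) \<le> \<epsilon>}. SUP k. q (tn k) A)" for \<epsilon>
    have c: "cconst P (\<lambda>f. \<integral>x. resolvent P \<alpha> f x \<partial>\<mu>) (tn \<circ> id) = Lim (at_right 0) G"
      unfolding cconst_def m G_def q_def by simp
    have "(G \<longlongrightarrow> 0) (at_right 0)"
    proof (rule tendstoI)
      fix e :: real assume e: "0 < e"
      obtain \<delta> where d: "0 < \<delta>" and key: "\<And>A n. A \<in> sets borel \<Longrightarrow> Mf (indicator A) \<le> \<delta> \<Longrightarrow> q (tn n) A \<le> e / 2"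
        using key[of "e/2"] e by auto
      show "\<forall>\<^sub>F x in at_right 0. dist (G x) 0 < e"
        using eventually_at_right_real[OF d]
      proof (rule eventually_mono)
        fix x assume x: "x \<in> {0<..<\<delta>}"
        define Sx where "Sx = {A \<in> sets borel. Mf (indicator A) \<le> x}"
        have ne: "{} \<in> Sx" unfolding Sx_def using x Mf_empty by simp
        have inner: "(SUP k. q (tn k) A) \<le> e / 2" if "A \<in> Sx" for A
          by (rule cSUP_least) (use that x key in \<open>auto simp: Sx_def\<close>)
        have G1: "G x \<le> e / 2" unfolding G_def Sx_def[symmetric]
          by (rule cSUP_least) (use ne inner in auto)
        have bdd: "bdd_above ((\<lambda>A. SUP k. q (tn k) A) ` Sx)"
          by (rule bdd_aboveI[where M="e/2"]) (use inner in auto)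
        have "(SUP k. q (tn k) {}) \<le> G x" unfolding G_def Sx_def[symmetric]
          by (rule cSUP_upper[OF ne bdd])
        then have G0: "0 \<le> G x" by (simp add: q_empty)
        show "dist (G x) 0 < e" using G0 G1 e by simp
      qed
    qed
    then show "cconst P (\<lambda>f. \<integral>x. resolvent P \<alpha> f x \<partial>\<mu>) (tn \<circ> id) = 0"
      unfolding c by (intro tendsto_Lim) auto
  qed
qed

end
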